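(* Let $\Omega$ be a finite set, $\phi:\mathbb{R}\to\mathbb{R}_{+}$ increasing, $c\in\mathbb{R}^{|\Omega|}_{+}$, $\sigma\ge0$, and $H_{\mathbb{B}}=\{(x,z)\in\{0,1\}^{|\Omega|}\times\mathbb{R}_{+}:\phi(\sigma+\sum_{i\in\Omega}c_ix_i)\le z\}$. Define $f_\sigma(\mathcal{S})=\phi(\sigma+\sum_{i\in\mathcal{S}}c_i)$ and $g_\sigma(\mathcal{S})=f_\sigma(\mathcal{S})-\phi(\sigma)$. Then for any $\gamma\in\Gamma(g_\sigma)$ the inequality $$-|\Omega|D[f_\sigma]+\sum_{s\in\Omega}\gamma_sx_s\le z-\phi(\sigma)$$ is valid for $\mathrm{conv}(H_{\mathbb{B}})$.
   Context: For a set function $h$ and permutation $\pi$ of $\Omega$, $\mathcal{S}^\pi_0=\emptyset$, $\mathcal{S}^\pi_k=\{\pi_1,\dots,\pi_k\}$; $\Gamma(h)=\{\gamma\in\mathbb{R}^{|\Omega|}:\exists$ permutation $\pi$ with $\gamma_{\pi_i}=h(\mathcal{S}^\pi_i)-h(\mathcal{S}^\pi_{i-1})$ for all $i\}$. $D[h]=\max\{h(\mathcal{A}\cup\mathcal{B}\cup\{s\})-h(\mathcal{A}\cup\mathcal{B})-h(\mathcal{A}\cup\{s\})+h(\mathcal{A}):\mathcal{A},\mathcal{B}\subseteq\Omega,s\in\Omega,|\mathcal{A}|\le|\Omega|-1\}$. *)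

theory Defs
  imports "HOL-Analysis.Analysis"
begin

text \<open>Ground set Omega is modelled as the finite type 'n (Omega = UNIV).
  A permutation pi of Omega is a distinct list enumerating UNIV; S^pi_k = set (take k pi).\<close>

definition Gamma :: "('n::finite set \<Rightarrow> real) \<Rightarrow> (real^'n) set" where
  "Gamma h = {\<gamma>. \<exists>\<pi>::'n list. distinct \<pi> \<and> set \<pi> = UNIV \<and>
      (\<forall>i < length \<pi>. \<gamma> $ (\<pi> ! i) = h (set (take (Suc i) \<pi>)) - h (set (take i \<pi>)))}"

definition Dmax :: "('n::finite set \<Rightarrow> real) \<Rightarrow> real" where
  "Dmax h = Max {h (A \<union> B \<union> {s}) - h (A \<union> B) - h (A \<union> {s}) + h A |
      A B s. card A \<le> CARD('n) - 1}"

definition HB :: "(real \<Rightarrow> real) \<Rightarrow> real^('n::finite) \<Rightarrow> real \<Rightarrow> ((real^'n) \<times> real) set" where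
  "HB \<phi> c \<sigma> = {(x, z). (\<forall>i. x $ i \<in> {0, 1}) \<and> z \<ge> 0 \<and>
      \<phi> (\<sigma> + (\<Sum>i\<in>UNIV. c $ i * x $ i)) \<le> z}"

definition f_sig :: "(real \<Rightarrow> real) \<Rightarrow> real^('n::finite) \<Rightarrow> real \<Rightarrow> 'n set \<Rightarrow> real" where
  "f_sig \<phi> c \<sigma> S = \<phi> (\<sigma> + (\<Sum>i\<in>S. c $ i))"

definition g_sig :: "(real \<Rightarrow> real) \<Rightarrow> real^('n::finite) \<Rightarrow> real \<Rightarrow> 'n set \<Rightarrow> real" where
  "g_sig \<phi> c \<sigma> S = f_sig \<phi> c \<sigma> S - \<phi> \<sigma>"

end

theory Submission
  imports Defs
begin

lemma Dmax_ge:
  fixes h :: "'n::finite set \<Rightarrow> real"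
  assumes "card A \<le> CARD('n) - 1"
  shows "h (A \<union> B \<union> {s}) - h (A \<union> B) - h (A \<union> {s}) + h A \<le> Dmax h"
proof -
  let ?F = "\<lambda>(A::'n set, B::'n set, s::'n). h (A \<union> B \<union> {s}) - h (A \<union> B) - h (A \<union> {s}) + h A"
  have "{h (A \<union> B \<union> {s}) - h (A \<union> B) - h (A \<union> {s}) + h A |
      A B s. card A \<le> CARD('n) - 1} \<subseteq> ?F ` UNIV"
  proof
    fix y assume "y \<in> {h (A \<union> B \<union> {s}) - h (A \<union> B) - h (A \<union> {s}) + h A |
      A B s. card A \<le> CARD('n) - 1}"
    then obtain A B s where "y = ?F (A, B, s)" by auto
    thus "y \<in> ?F ` UNIV" by blast
  qed
  hence fin: "finite {h (A \<union> B \<union> {s}) - h (A \<union> B) - h (A \<union> {s}) + h A |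
      A B s. card A \<le> CARD('n) - 1}" by (rule finite_subset) simp
  show ?thesis unfolding Dmax_def
    by (rule Max_ge[OF fin]) (use assms in blast)
qed

lemma Dmax_nonneg:
  fixes h :: "'n::finite set \<Rightarrow> real"
  shows "0 \<le> Dmax h"
  using Dmax_ge[of "{}" h "{}" undefined] by simp

lemma key:
  fixes h :: "'n::finite set \<Rightarrow> real" and \<gamma> :: "real^'n"
  assumes d: "distinct \<pi>" and u: "set \<pi> = UNIV"
    and g: "\<forall>i < length \<pi>. \<gamma> $ (\<pi> ! i) = h (set (take (Suc i) \<pi>)) - h (set (take i \<pi>))"
  shows "k \<le> length \<pi> \<Longrightarrow> (\<Sum>s\<in>T \<inter> set (take k \<pi>). \<gamma> $ s) \<le> h (T \<inter> set (take k \<pi>)) - h {} + real k * Dmax h"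
proof (induction k)
  case 0
  then show ?case by simp
next
  case (Suc k)
  hence k: "k < length \<pi>" by simp
  define s where "s = \<pi> ! k"
  define S where "S = set (take k \<pi>)"
  have SS: "set (take (Suc k) \<pi>) = insert s S"
    using k by (simp add: take_Suc_conv_app_nth s_def S_def)
  have sS: "s \<notin> S" using d k unfolding s_def S_def
    by (auto simp: in_set_conv_nth nth_eq_iff_index_eq)
  have cardS: "card S = k" using d k unfolding S_def by (simp add: distinct_card)
  have clen: "length \<pi> = CARD('n)" using d u by (metis distinct_card)
  have IH: "(\<Sum>s\<in>T \<inter> S. \<gamma> $ s) \<le> h (T \<inter> S) - h {} + real k * Dmax h"
    using Suc k unfolding S_def by simp
  have D0: "0 \<le> Dmax h" by (rule Dmax_nonneg)
  show ?case
  proof (cases "s \<in> T")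
    case True
    have eq: "T \<inter> insert s S = insert s (T \<inter> S)" using True by auto
    have gs: "\<gamma> $ s = h (insert s S) - h S" using g k SS unfolding s_def S_def by simp
    have cA: "card (T \<inter> S) \<le> CARD('n) - 1"
      using card_mono[of S "T \<inter> S"] cardS k clen by auto
    have "h ((T \<inter> S) \<union> S \<union> {s}) - h ((T \<inter> S) \<union> S) - h ((T \<inter> S) \<union> {s}) + h (T \<inter> S) \<le> Dmax h"
      by (rule Dmax_ge[OF cA])
    moreover have "(T \<inter> S) \<union> S = S" by auto
    moreover have "S \<union> {s} = insert s S" by auto
    moreover have "(T \<inter> S) \<union> {s} = insert s (T \<inter> S)" by auto
    ultimately have "\<gamma> $ s \<le> h (insert s (T \<inter> S)) - h (T \<inter> S) + Dmax h" using gs by simp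
    moreover have "(\<Sum>s\<in>insert s (T \<inter> S). \<gamma> $ s) = \<gamma> $ s + (\<Sum>s\<in>T \<inter> S. \<gamma> $ s)"
      using sS by simp
    ultimately show ?thesis using IH SS eq by (simp add: algebra_simps)
  next
    case False
    have eq: "T \<inter> insert s S = T \<inter> S" using False by auto
    show ?thesis using IH SS eq D0 by (simp add: algebra_simps)
  qed
qed

theorem mainTheorem9:
  fixes \<phi> :: "real \<Rightarrow> real" and c :: "real^('n::finite)" and \<sigma> :: real and \<gamma> :: "real^'n"
  assumes "mono \<phi>" and "\<And>t. \<phi> t \<ge> 0"
    and "\<And>i. c $ i \<ge> 0" and "\<sigma> \<ge> 0"
    and "\<gamma> \<in> Gamma (g_sig \<phi> c \<sigma>)"
  shows "\<forall>(x, z) \<in> convex hull (HB \<phi> c \<sigma>).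
     - real CARD('n) * Dmax (f_sig \<phi> c \<sigma>) + (\<Sum>s\<in>UNIV. \<gamma> $ s * x $ s) \<le> z - \<phi> \<sigma>"
proof -
  let ?f = "f_sig \<phi> c \<sigma>"
  let ?D = "Dmax ?f"
  let ?H = "{p :: (real^'n) \<times> real. - real CARD('n) * ?D + (\<Sum>s\<in>UNIV. \<gamma> $ s * fst p $ s) \<le> snd p - \<phi> \<sigma>}"
  obtain \<pi> :: "'n list" where d: "distinct \<pi>" and u: "set \<pi> = UNIV"
    and g0: "\<forall>i < length \<pi>. \<gamma> $ (\<pi> ! i) = g_sig \<phi> c \<sigma> (set (take (Suc i) \<pi>)) - g_sig \<phi> c \<sigma> (set (take i \<pi>))"
    using assms(5) unfolding Gamma_def by blast
  have g: "\<forall>i < length \<pi>. \<gamma> $ (\<pi> ! i) = ?f (set (take (Suc i) \<pi>)) - ?f (set (take i \<pi>))"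
    using g0 by (simp add: g_sig_def)
  have clen: "length \<pi> = CARD('n)" using d u by (metis distinct_card)
  have bound: "(\<Sum>s\<in>T. \<gamma> $ s) \<le> ?f T - ?f {} + real CARD('n) * ?D" for T
    using key[OF d u g, of "length \<pi>" T] u clen by simp
  have sub: "HB \<phi> c \<sigma> \<subseteq> ?H"
  proof
    fix p assume p: "p \<in> HB \<phi> c \<sigma>"
    obtain x z where pxz: "p = (x, z)" by (cases p)
    have x01: "\<And>i. x $ i \<in> {0, 1}" and zf: "\<phi> (\<sigma> + (\<Sum>i\<in>UNIV. c $ i * x $ i)) \<le> z"
      using p pxz unfolding HB_def by auto
    define T where "T = {i. x $ i = 1}"
    have e1: "(\<Sum>i\<in>UNIV. c $ i * x $ i) = (\<Sum>i\<in>T. c $ i)"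
    proof -
      have "(\<Sum>i\<in>UNIV. c $ i * x $ i) = (\<Sum>i\<in>UNIV. if i \<in> T then c $ i else 0)"
        by (rule sum.cong) (use x01 in \<open>auto simp: T_def\<close>)
      also have "\<dots> = (\<Sum>i\<in>T. c $ i)" by (simp add: sum.If_cases)
      finally show ?thesis .
    qed
    have e2: "(\<Sum>i\<in>UNIV. \<gamma> $ i * x $ i) = (\<Sum>i\<in>T. \<gamma> $ i)"
    proof -
      have "(\<Sum>i\<in>UNIV. \<gamma> $ i * x $ i) = (\<Sum>i\<in>UNIV. if i \<in> T then \<gamma> $ i else 0)"
        by (rule sum.cong) (use x01 in \<open>auto simp: T_def\<close>)
      also have "\<dots> = (\<Sum>i\<in>T. \<gamma> $ i)" by (simp add: sum.If_cases)
      finally show ?thesis .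
    qed
    have "?f T \<le> z" using zf e1 by (simp add: f_sig_def)
    moreover have "?f {} = \<phi> \<sigma>" by (simp add: f_sig_def)
    ultimately show "p \<in> ?H" using bound[of T] e2 pxz by simp
  qed
  have cvx: "convex ?H"
  proof -
    have lin: "(\<Sum>s\<in>UNIV. \<gamma> $ s * (u *\<^sub>R a + v *\<^sub>R b) $ s) = u * (\<Sum>s\<in>UNIV. \<gamma> $ s * a $ s) + v * (\<Sum>s\<in>UNIV. \<gamma> $ s * b $ s)"
      for u v :: real and a b :: "real^'n"
      by (simp add: sum.distrib sum_distrib_left algebra_simps)
    show ?thesis unfolding convex_def
    proof (intro ballI allI impI)
      fix p q :: "(real^'n) \<times> real" and u v :: real
      assume p: "p \<in> ?H" and q: "q \<in> ?H" and uv: "0 \<le> u" "0 \<le> v" "u + v = 1"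
      have "u * (- real CARD('n) * ?D + (\<Sum>s\<in>UNIV. \<gamma> $ s * fst p $ s)) \<le> u * (snd p - \<phi> \<sigma>)"
        using p uv by (intro mult_left_mono) auto
      moreover have "v * (- real CARD('n) * ?D + (\<Sum>s\<in>UNIV. \<gamma> $ s * fst q $ s)) \<le> v * (snd q - \<phi> \<sigma>)"
        using q uv by (intro mult_left_mono) auto
      ultimately have "u * (- real CARD('n) * ?D + (\<Sum>s\<in>UNIV. \<gamma> $ s * fst p $ s)) + v * (- real CARD('n) * ?D + (\<Sum>s\<in>UNIV. \<gamma> $ s * fst q $ s))
         \<le> u * (snd p - \<phi> \<sigma>) + v * (snd q - \<phi> \<sigma>)" by linarith
      moreover have vv: "v = 1 - u" using uv by simp
      ultimately show "u *\<^sub>R p + v *\<^sub>R q \<in> ?H" using lin[of u "fst p" v "fst q"]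
        unfolding vv by (simp add: algebra_simps)
    qed
  qed
  have "convex hull (HB \<phi> c \<sigma>) \<subseteq> ?H" using hull_minimal[of _ _ convex, OF sub cvx] .
  thus ?thesis by auto
qed

end
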